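(* For every $m\in\mathbb Z$ and every $q\in\mathbb C$ with $|q|\neq 1$ (and $q\ne 0$), the $3\times 3$ matrix $$\mathbf J_m(q)=\begin{pmatrix}1 & G^{(2)}_m(q) & G^{(2)}_{m+1}(q)\\ 0 & G^{(1)}_m(q) & G^{(1)}_{m+1}(q)\\ 0& G^{(0)}_m(q) & G^{(0)}_{m+1}(q)\end{pmatrix}$$ satisfies $$\mathbf J_{m+1}(q)=\mathbf J_m(q)\,A(q^m,q),\qquad A(q^m,q)=\begin{pmatrix}1&0&1\\0&0&-1\\0&1&2-q^{m+1}\end{pmatrix},$$ has $\det \mathbf J_m(q)=-1$, and satisfies $$\mathbf J_m(q^{-1})=\begin{pmatrix}1&0&0\\0&-1&0\\0&0&1\end{pmatrix}\mathbf J_{-m-1}(q)\begin{pmatrix}1&0&0\\0&0&1\\0&1&0\end{pmatrix}.$$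
   Context: Notation: $(a;q)_n=\prod_{j=0}^{n-1}(1-aq^j)$. For $|q|<1$ and integers $k\ge1$, $n\ge 0$, put $E_k^{(n)}(q)=\sum_{s\ge1}s^{k-1}\frac{q^{s(n+1)}}{1-q^s}$ and $E_2(q)=1-24E_2^{(0)}(q)$. For $|q|<1$ and $m\in\mathbb Z$ define $G^{(0)}_m(q)=\sum_{n\ge0}(-1)^n\frac{q^{n(n+1)/2+mn}}{(q;q)_n^2}$, $G^{(1)}_m(q)=\sum_{n\ge0}\big(n+m+\tfrac12-2E_1^{(n)}(q)\big)(-1)^n\frac{q^{n(n+1)/2+mn}}{(q;q)_n^2}$, $G^{(2)}_m(q)=\sum_{n\ge0}\Big(\tfrac12\big(n+m+\tfrac12-2E_1^{(n)}(q)\big)^2-E_2^{(n)}(q)-\tfrac1{24}E_2(q)\Big)(-1)^n\frac{q^{n(n+1)/2+mn}}{(q;q)_n^2}$. These are extended to $|q|>1$ by setting $G^{(j)}_m(q^{-1})=(-1)^jG^{(j)}_{-m}(q)$ for $|q|<1$, $j=0,1,2$. *)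

theory Defs
  imports "HOL-Analysis.Analysis"
begin

definition qpoch :: "complex \<Rightarrow> complex \<Rightarrow> nat \<Rightarrow> complex" where
  "qpoch a q n = (\<Prod>j<n. 1 - a * q ^ j)"

definition Ekn :: "nat \<Rightarrow> nat \<Rightarrow> complex \<Rightarrow> complex" where
  "Ekn k n q = (\<Sum>t. of_nat (Suc t) ^ (k - 1) * q ^ (Suc t * (n + 1)) / (1 - q ^ Suc t))"

definition E2 :: "complex \<Rightarrow> complex" where
  "E2 q = 1 - 24 * Ekn 2 0 q"

definition Gterm :: "int \<Rightarrow> complex \<Rightarrow> nat \<Rightarrow> complex" where
  "Gterm m q n = (-1) ^ n * q powi (int (n * (n + 1) div 2) + m * int n) / (qpoch q q n) ^ 2"

definition Lfac :: "int \<Rightarrow> complex \<Rightarrow> nat \<Rightarrow> complex" where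
  "Lfac m q n = of_nat n + of_int m + 1/2 - 2 * Ekn 1 n q"

definition G0in :: "int \<Rightarrow> complex \<Rightarrow> complex" where
  "G0in m q = (\<Sum>n. Gterm m q n)"

definition G1in :: "int \<Rightarrow> complex \<Rightarrow> complex" where
  "G1in m q = (\<Sum>n. Lfac m q n * Gterm m q n)"

definition G2in :: "int \<Rightarrow> complex \<Rightarrow> complex" where
  "G2in m q = (\<Sum>n. ((1/2) * (Lfac m q n) ^ 2 - Ekn 2 n q - (1/24) * E2 q) * Gterm m q n)"

text \<open>Extension to |q| > 1 via G^(j)_m(q^{-1}) = (-1)^j G^(j)_{-m}(q) for |q|<1.\<close>
definition G0 :: "int \<Rightarrow> complex \<Rightarrow> complex" where
  "G0 m q = (if norm q < 1 then G0in m q else G0in (- m) (inverse q))"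

definition G1 :: "int \<Rightarrow> complex \<Rightarrow> complex" where
  "G1 m q = (if norm q < 1 then G1in m q else - G1in (- m) (inverse q))"

definition G2 :: "int \<Rightarrow> complex \<Rightarrow> complex" where
  "G2 m q = (if norm q < 1 then G2in m q else G2in (- m) (inverse q))"

definition Jmat :: "int \<Rightarrow> complex \<Rightarrow> complex ^ 3 ^ 3" where
  "Jmat m q = vector [vector [1, G2 m q, G2 (m + 1) q],
                      vector [0, G1 m q, G1 (m + 1) q],
                      vector [0, G0 m q, G0 (m + 1) q]]"

definition Amat :: "int \<Rightarrow> complex \<Rightarrow> complex ^ 3 ^ 3" where
  "Amat m q = vector [vector [1, 0, 1],
                      vector [0, 0, -1],
                      vector [0, 1, 2 - q powi (m + 1)]]"

end

theory Submission
  imports Defs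
begin

lemma tri_Suc: "Suc k * (Suc k + 1) div 2 = k * (k + 1) div 2 + Suc k"
proof -
  have "Suc k * (Suc k + 1) = k * (k + 1) + 2 * Suc k" by simp
  thus ?thesis by simp
qed

lemma qpoch_Suc: "qpoch a q (Suc n) = qpoch a q n * (1 - a * q ^ n)"
  by (simp add: qpoch_def)

lemma qpoch_nz: assumes "norm q < 1" shows "qpoch q q n \<noteq> 0"
proof -
  have "1 - q * q ^ j \<noteq> 0" for j
  proof
    assume "1 - q * q ^ j = 0"
    hence "norm (q * q ^ j) = 1" by (metis norm_one eq_iff_diff_eq_0)
    moreover have "norm q ^ j \<le> 1" using assms by (simp add: power_le_one)
    hence "norm q * norm q ^ j \<le> norm q" by (simp add: mult_left_le)
    hence "norm (q * q ^ j) < 1" using assms by (simp add: norm_mult norm_power)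
    ultimately show False by simp
  qed
  thus ?thesis by (simp add: qpoch_def)
qed

lemma Gterm_shift:
  assumes "q \<noteq> 0"
  shows "Gterm (m + int j) q n = q ^ (j * n) * Gterm m q n"
proof -
  have "q powi (int (n * (n + 1) div 2) + (m + int j) * int n) =
        q powi (int (n * (n + 1) div 2) + m * int n) * q powi (int (j * n))"
    using assms by (simp add: power_int_add [symmetric] algebra_simps)
  moreover have "q powi (int (j * n)) = q ^ (j * n)" by (rule power_int_of_nat)
  ultimately show ?thesis by (simp add: Gterm_def)
qed

lemma Gterm_Suc:
  assumes "q \<noteq> 0" "norm q < 1"
  shows "Gterm m q (Suc k) * (1 - q ^ Suc k)^2 = - (q powi (m + 1)) * Gterm (m + 1) q k"
proof -
  have e: "int (Suc k * (Suc k + 1) div 2) + m * int (Suc k) =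
     (int (k * (k + 1) div 2) + (m + 1) * int k) + (m + 1)"
    by (simp only: tri_Suc) (simp add: algebra_simps)
  have p: "q powi (int (Suc k * (Suc k + 1) div 2) + m * int (Suc k)) =
     q powi (int (k * (k + 1) div 2) + (m + 1) * int k) * q powi (m + 1)"
    unfolding e using assms(1) by (simp add: power_int_add)
  have nz: "qpoch q q k \<noteq> 0" "1 - q * q ^ k \<noteq> 0"
    using qpoch_nz[OF assms(2), of k] qpoch_nz[OF assms(2), of "Suc k"] assms
    by (auto simp: qpoch_Suc)
  define a where "a = qpoch q q k"
  define b where "b = 1 - q * q ^ k"
  define P where "P = q powi (int (k * (k + 1) div 2) + (m + 1) * int k)"
  have g1: "Gterm m q (Suc k) = - ((-1)^k * P * q powi (m+1)) / (a*b)^2"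
    unfolding Gterm_def p qpoch_Suc a_def b_def P_def by simp
  have g2: "Gterm (m+1) q k = (-1)^k * P / a^2" unfolding Gterm_def P_def a_def by simp
  have g3: "1 - q ^ Suc k = b" unfolding b_def by simp
  show ?thesis unfolding g1 g2 g3 using nz unfolding a_def[symmetric] b_def[symmetric]
    by (simp add: field_simps power2_eq_square)
qed

definition ebd :: "(nat \<Rightarrow> complex) \<Rightarrow> bool" where
  "ebd f \<longleftrightarrow> (\<exists>C K. \<forall>n. norm (f n) \<le> C * K ^ n)"

lemma ebdE:
  assumes "ebd f"
  obtains C K where "0 \<le> C" "1 \<le> K" "\<And>n. norm (f n) \<le> C * K ^ n"
proof -
  obtain C K where h: "\<And>n. norm (f n) \<le> C * K ^ n" using assms unfolding ebd_def by blast
  have "norm (f n) \<le> \<bar>C\<bar> * (max 1 \<bar>K\<bar>) ^ n" for n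
  proof -
    have "C * K ^ n \<le> \<bar>C * K ^ n\<bar>" by simp
    also have "\<dots> = \<bar>C\<bar> * \<bar>K\<bar> ^ n" by (simp add: abs_mult power_abs)
    also have "\<dots> \<le> \<bar>C\<bar> * (max 1 \<bar>K\<bar>) ^ n"
      by (intro mult_left_mono power_mono) auto
    finally show ?thesis using h[of n] by linarith
  qed
  thus ?thesis using that[of "\<bar>C\<bar>" "max 1 \<bar>K\<bar>"] by auto
qed

lemma ebdI: "(\<And>n. norm (f n) \<le> C * K ^ n) \<Longrightarrow> ebd f"
  unfolding ebd_def by blast

lemma ebd_const: "ebd (\<lambda>n. c)"
  by (rule ebdI[of _ "norm c" 1]) simp

lemma ebd_power: "ebd (\<lambda>n. z ^ n)"
  by (rule ebdI[of _ 1 "norm z"]) (simp add: norm_power)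

lemma ebd_add:
  assumes "ebd f" "ebd g" shows "ebd (\<lambda>n. f n + g n)"
proof -
  obtain C1 K1 where 1: "0 \<le> C1" "1 \<le> K1" "\<And>n. norm (f n) \<le> C1 * K1 ^ n" using ebdE[OF assms(1)] by blast
  obtain C2 K2 where 2: "0 \<le> C2" "1 \<le> K2" "\<And>n. norm (g n) \<le> C2 * K2 ^ n" using ebdE[OF assms(2)] by blast
  show ?thesis
  proof (rule ebdI[of _ "C1 + C2" "max K1 K2"])
    fix n
    have "norm (f n + g n) \<le> C1 * K1 ^ n + C2 * K2 ^ n" using 1 2 norm_triangle_le by (meson add_mono)
    also have "\<dots> \<le> C1 * (max K1 K2) ^ n + C2 * (max K1 K2) ^ n"
      using 1 2 by (intro add_mono mult_left_mono power_mono) auto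
    finally show "norm (f n + g n) \<le> (C1 + C2) * (max K1 K2) ^ n" by (simp add: algebra_simps)
  qed
qed

lemma ebd_mult:
  assumes "ebd f" "ebd g" shows "ebd (\<lambda>n. f n * g n)"
proof -
  obtain C1 K1 where 1: "0 \<le> C1" "1 \<le> K1" "\<And>n. norm (f n) \<le> C1 * K1 ^ n" using ebdE[OF assms(1)] by blast
  obtain C2 K2 where 2: "0 \<le> C2" "1 \<le> K2" "\<And>n. norm (g n) \<le> C2 * K2 ^ n" using ebdE[OF assms(2)] by blast
  show ?thesis
  proof (rule ebdI[of _ "C1 * C2" "K1 * K2"])
    fix n
    have "norm (f n * g n) \<le> (C1 * K1 ^ n) * (C2 * K2 ^ n)"
      unfolding norm_mult using 1 2 by (intro mult_mono) auto
    thus "norm (f n * g n) \<le> (C1 * C2) * (K1 * K2) ^ n" by (simp add: algebra_simps power_mult_distrib)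
  qed
qed

lemma ebd_minus: "ebd f \<Longrightarrow> ebd (\<lambda>n. - f n)"
  unfolding ebd_def by simp

lemma ebd_diff: "ebd f \<Longrightarrow> ebd g \<Longrightarrow> ebd (\<lambda>n. f n - g n)"
  using ebd_add[OF _ ebd_minus, of f g] by simp

lemma ebd_Suc:
  assumes "ebd f" shows "ebd (\<lambda>n. f (Suc n))"
proof -
  obtain C K where 1: "0 \<le> C" "1 \<le> K" "\<And>n. norm (f n) \<le> C * K ^ n" using ebdE[OF assms(1)] by blast
  show ?thesis by (rule ebdI[of _ "C * K" K]) (use 1(3)[of "Suc n" for n] in \<open>simp add: algebra_simps\<close>)
qed

lemma ebd_diff_bounded:
  assumes "\<And>n. norm (f (Suc n) - f n) \<le> B" shows "ebd f"
proof (rule ebdI[of _ "norm (f 0) + \<bar>B\<bar>" 2])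
  fix n show "norm (f n) \<le> (norm (f 0) + \<bar>B\<bar>) * 2 ^ n"
  proof (induction n)
    case 0 thus ?case by simp
  next
    case (Suc n)
    have "norm (f (Suc n)) \<le> norm (f n) + norm (f (Suc n) - f n)"
      by (metis add.commute diff_add_cancel norm_triangle_ineq)
    also have "\<dots> \<le> (norm (f 0) + \<bar>B\<bar>) * 2 ^ n + \<bar>B\<bar>" using Suc assms[of n] by linarith
    finally have a: "norm (f (Suc n)) \<le> (norm (f 0) + \<bar>B\<bar>) * 2 ^ n + \<bar>B\<bar>" .
    have b: "\<bar>B\<bar> \<le> (norm (f 0) + \<bar>B\<bar>) * 2 ^ n"
    proof -
      have "\<bar>B\<bar> \<le> (norm (f 0) + \<bar>B\<bar>) * 1" by simp
      also have "\<dots> \<le> (norm (f 0) + \<bar>B\<bar>) * 2 ^ n" by (intro mult_left_mono) auto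
      finally show ?thesis .
    qed
    show ?case using a b by simp
  qed
qed

lemma norm_one_minus_pow:
  fixes q :: complex
  assumes "norm q < 1" shows "1 - norm q \<le> norm (1 - q ^ Suc k)"
proof -
  have "norm q ^ Suc k \<le> norm q" using assms by (simp add: mult_left_le power_le_one)
  hence "norm (q ^ Suc k) \<le> norm q" by (simp add: norm_power norm_mult)
  moreover have "1 - norm (q ^ Suc k) \<le> norm (1 - q ^ Suc k)"
    by (metis norm_one norm_triangle_ineq2)
  ultimately show ?thesis by linarith
qed

lemma Gterm_step_bound:
  fixes q :: complex
  assumes "q \<noteq> 0" "norm q < 1"
  shows "norm (Gterm m q (Suc n)) * (1 - norm q)^2 \<le> norm (q powi (m+1)) * norm q ^ n * norm (Gterm m q n)"
proof -
  have e: "Gterm m q (Suc n) * (1 - q ^ Suc n)^2 = - (q powi (m + 1)) * (q ^ n * Gterm m q n)"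
    using Gterm_Suc[OF assms, of m n] Gterm_shift[OF assms(1), of m 1 n] by simp
  have "norm (Gterm m q (Suc n)) * (1 - norm q)^2 \<le> norm (Gterm m q (Suc n)) * norm (1 - q ^ Suc n)^2"
    using norm_one_minus_pow[OF assms(2), of n] assms(2)
    by (intro mult_left_mono power_mono) auto
  also have "\<dots> = norm (Gterm m q (Suc n) * (1 - q ^ Suc n)^2)" by (simp add: norm_mult norm_power)
  also have "\<dots> = norm (q powi (m+1)) * norm q ^ n * norm (Gterm m q n)"
    unfolding e by (simp add: norm_mult norm_power)
  finally show ?thesis .
qed

lemma summable_Gterm_norm:
  fixes q :: complex
  assumes "q \<noteq> 0" "norm q < 1" "ebd w"
  shows "summable (\<lambda>n. norm (w n * Gterm m q n))"
proof -
  obtain C K where CK: "0 \<le> C" "1 \<le> K" "\<And>n. norm (w n) \<le> C * K ^ n" using ebdE[OF assms(3)] by blast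
  define d where "d = (1 - norm q)^2"
  define c0 where "c0 = norm (q powi (m+1))"
  have d: "d > 0" unfolding d_def using assms by simp
  have c0: "c0 \<ge> 0" unfolding c0_def by simp
  define \<epsilon> where "\<epsilon> = d / (2 * K * (c0 + 1))"
  have eps: "\<epsilon> > 0" unfolding \<epsilon>_def using d c0 CK by simp
  have "\<forall>\<^sub>F n in sequentially. norm q ^ n < \<epsilon>"
    using order_tendstoD(2)[OF LIMSEQ_power_zero[of "norm q"] eps] assms by simp
  then obtain N where N: "\<And>n. n \<ge> N \<Longrightarrow> norm q ^ n < \<epsilon>" unfolding eventually_sequentially by blast
  define f where "f n = K ^ n * norm (Gterm m q n)" for n
  have rat: "norm (f (Suc n)) \<le> 1/2 * norm (f n)" if "n \<ge> N" for n
  proof -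
    let ?g = "norm (Gterm m q n)" and ?g' = "norm (Gterm m q (Suc n))"
    have "?g' * d \<le> c0 * norm q ^ n * ?g" unfolding d_def c0_def by (rule Gterm_step_bound[OF assms(1,2)])
    also have "\<dots> \<le> c0 * \<epsilon> * ?g" using N[OF that] c0 by (intro mult_right_mono mult_left_mono) auto
    also have "c0 * \<epsilon> \<le> d / (2 * K)"
    proof -
      have "c0 * \<epsilon> = d / (2 * K) * (c0 / (c0 + 1))" unfolding \<epsilon>_def using c0 CK by (simp add: field_simps)
      also have "\<dots> \<le> d / (2 * K) * 1" using d CK c0 by (intro mult_left_mono) auto
      finally show ?thesis by simp
    qed
    hence "c0 * \<epsilon> * ?g \<le> d / (2 * K) * ?g" by (intro mult_right_mono) auto
    finally have "?g' * d \<le> d / (2 * K) * ?g" .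
    hence "?g' \<le> ?g / (2 * K)" using d CK by (simp add: field_simps)
    hence "K ^ Suc n * ?g' \<le> K ^ Suc n * (?g / (2 * K))" using CK by (intro mult_left_mono) auto
    also have "\<dots> = 1/2 * (K ^ n * ?g)" using CK by (simp add: field_simps)
    finally show ?thesis unfolding f_def using CK by simp
  qed
  have sf: "summable f" by (rule summable_ratio_test[of "1/2" N]) (use rat in auto)
  show ?thesis
  proof (rule summable_comparison_test'[OF summable_mult[OF sf, of C]])
    fix n
    have "norm (w n * Gterm m q n) \<le> C * K ^ n * norm (Gterm m q n)"
      unfolding norm_mult by (intro mult_right_mono CK) auto
    thus "norm (norm (w n * Gterm m q n)) \<le> C * f n" unfolding f_def by (simp add: mult.assoc)
  qed
qed

lemma summable_Gterm:
  fixes q :: complex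
  assumes "q \<noteq> 0" "norm q < 1" "ebd w"
  shows "summable (\<lambda>n. w n * Gterm m q n)"
  by (rule summable_norm_cancel[OF summable_Gterm_norm[OF assms]])

lemma Gterm_0 [simp]: "Gterm m q 0 = 1"
  by (simp add: Gterm_def qpoch_def)

lemma rec_gen:
  fixes q :: complex
  assumes q: "q \<noteq> 0" "norm q < 1" and w: "ebd w0" "ebd w1" "ebd w2"
    and cond: "\<And>k. w2 (Suc k) * q ^ (2 * Suc k) - 2 * w1 (Suc k) * q ^ Suc k + w0 (Suc k)
                   = w1 k * (1 - q ^ Suc k)^2"
  shows "(\<Sum>n. w2 n * Gterm (m+2) q n) - (2 - q powi (m+1)) * (\<Sum>n. w1 n * Gterm (m+1) q n)
          + (\<Sum>n. w0 n * Gterm m q n) = w2 0 - 2 * w1 0 + w0 0"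
proof -
  define x where "x = q powi (m+1)"
  define G where "G n = Gterm m q n" for n
  define A where "A n = w2 n * q ^ (2 * n) - 2 * w1 n * q ^ n + w0 n" for n
  have h2: "Gterm (m+2) q n = q ^ (2*n) * G n" for n
    using Gterm_shift[OF q(1), of m 2 n] unfolding G_def by simp
  have h1: "Gterm (m+1) q n = q ^ n * G n" for n
    using Gterm_shift[OF q(1), of m 1 n] unfolding G_def by simp
  have ep2: "ebd (\<lambda>n. q ^ (2 * n))" using ebd_power[of "q^2"] by (simp add: power_mult)
  have e2: "ebd (\<lambda>n. w2 n * q ^ (2 * n))" by (rule ebd_mult[OF w(3) ep2])
  have e1: "ebd (\<lambda>n. 2 * w1 n * q ^ n)" by (intro ebd_mult ebd_const ebd_power w)
  have eA: "ebd A" unfolding A_def by (intro ebd_add ebd_diff e2 e1 w)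
  have s2: "summable (\<lambda>n. (w2 n * q ^ (2 * n)) * G n)" unfolding G_def by (rule summable_Gterm[OF q e2])
  have s1: "summable (\<lambda>n. (2 * w1 n * q ^ n) * G n)" unfolding G_def by (rule summable_Gterm[OF q e1])
  have s0: "summable (\<lambda>n. w0 n * G n)" unfolding G_def by (rule summable_Gterm[OF q w(1)])
  have sA: "summable (\<lambda>n. A n * G n)" unfolding G_def by (rule summable_Gterm[OF q eA])
  have s1': "summable (\<lambda>n. w1 n * Gterm (m+1) q n)" by (rule summable_Gterm[OF q w(2)])
  have S2: "(\<Sum>n. w2 n * Gterm (m+2) q n) = (\<Sum>n. (w2 n * q ^ (2 * n)) * G n)"
    by (rule suminf_cong) (simp add: h2)
  have S1: "2 * (\<Sum>n. w1 n * Gterm (m+1) q n) = (\<Sum>n. (2 * w1 n * q ^ n) * G n)"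
    by (subst suminf_mult[OF s1', symmetric], rule suminf_cong) (simp add: h1)
  have SA: "(\<Sum>n. A n * G n) = (\<Sum>n. (w2 n * q ^ (2 * n)) * G n) - (\<Sum>n. (2 * w1 n * q ^ n) * G n)
             + (\<Sum>n. w0 n * G n)"
    by (subst suminf_diff[OF s2 s1], subst suminf_add[OF summable_diff[OF s2 s1] s0])
       (rule suminf_cong, simp add: A_def algebra_simps)
  have shift: "A (Suc k) * G (Suc k) = - x * (w1 k * Gterm (m+1) q k)" for k
  proof -
    have "A (Suc k) * G (Suc k) = w1 k * (G (Suc k) * (1 - q ^ Suc k)^2)"
      using cond[of k] unfolding A_def by (simp add: algebra_simps)
    also have "\<dots> = - x * (w1 k * Gterm (m+1) q k)"
      unfolding G_def x_def Gterm_Suc[OF q] by simp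
    finally show ?thesis .
  qed
  have "(\<Sum>n. A n * G n) = A 0 * G 0 + (\<Sum>k. A (Suc k) * G (Suc k))"
    using suminf_split_head[OF sA] by simp
  also have "(\<Sum>k. A (Suc k) * G (Suc k)) = - x * (\<Sum>n. w1 n * Gterm (m+1) q n)"
    unfolding shift by (rule suminf_mult[OF s1'])
  finally have "(\<Sum>n. A n * G n) = A 0 - x * (\<Sum>n. w1 n * Gterm (m+1) q n)"
    by (simp add: G_def)
  hence "(\<Sum>n. w2 n * Gterm (m+2) q n) - 2 * (\<Sum>n. w1 n * Gterm (m+1) q n)
          + (\<Sum>n. w0 n * Gterm m q n) = A 0 - x * (\<Sum>n. w1 n * Gterm (m+1) q n)"
    unfolding S2 S1 using SA by (simp add: G_def)
  thus ?thesis unfolding A_def x_def by (simp add: algebra_simps)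
qed

lemma Ekn_term_bound:
  fixes q :: complex
  assumes "norm q < 1" "k \<le> 2"
  shows "norm (of_nat (Suc t) ^ (k - 1) * q ^ (Suc t * (n + 1)) / (1 - q ^ Suc t))
           \<le> of_nat (Suc t) * norm q ^ t / (1 - norm q)"
proof -
  have r: "0 \<le> norm q" "norm q < 1" using assms by auto
  have a: "norm (of_nat (Suc t) ^ (k - 1) :: complex) \<le> of_nat (Suc t)"
  proof (cases "k - 1 = 0")
    case True thus ?thesis by simp
  next
    case False hence "k - 1 = 1" using assms by simp
    thus ?thesis using norm_of_nat[of "Suc t", where 'a=complex] by (simp del: of_nat_Suc)
  qed
  have b: "norm (q ^ (Suc t * (n + 1))) \<le> norm q ^ t"
    unfolding norm_power by (rule power_decreasing) (use r in auto)
  have c: "1 - norm q \<le> norm (1 - q ^ Suc t)" by (rule norm_one_minus_pow[OF assms(1)])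
  have "norm (of_nat (Suc t) ^ (k - 1) * q ^ (Suc t * (n + 1))) \<le> of_nat (Suc t) * norm q ^ t"
    unfolding norm_mult by (intro mult_mono a b) auto
  moreover have "norm (1 - q ^ Suc t) > 0" using c r by linarith
  ultimately show ?thesis using c r unfolding norm_divide
    by (intro frac_le) auto
qed

lemma Ekn_summable:
  fixes q :: complex
  assumes "norm q < 1" "k \<le> 2"
  shows "summable (\<lambda>t. of_nat (Suc t) ^ (k - 1) * q ^ (Suc t * (n + 1)) / (1 - q ^ Suc t))"
proof (rule summable_comparison_test'[OF _ Ekn_term_bound[OF assms]])
  have "summable (\<lambda>t. of_nat (Suc t) * norm q ^ t)"
    using geometric_deriv_sums[of "norm q"] assms by (simp add: sums_iff)
  thus "summable (\<lambda>t. of_nat (Suc t) * norm q ^ t / (1 - norm q))"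
    by (rule summable_divide)
qed

lemma Ekn_diff_sums:
  fixes q :: complex
  assumes "norm q < 1" "k \<le> 2"
  shows "(\<lambda>t. of_nat (Suc t) ^ (k - 1) * (q ^ Suc n) ^ Suc t) sums (Ekn k n q - Ekn k (Suc n) q)"
proof -
  have s1: "summable (\<lambda>t. of_nat (Suc t) ^ (k - 1) * q ^ (Suc t * (n + 1)) / (1 - q ^ Suc t))"
    by (rule Ekn_summable[OF assms])
  have s2: "summable (\<lambda>t. of_nat (Suc t) ^ (k - 1) * q ^ (Suc t * (Suc n + 1)) / (1 - q ^ Suc t))"
    by (rule Ekn_summable[OF assms])
  have nz: "1 - q ^ Suc t \<noteq> 0" for t
    using norm_one_minus_pow[OF assms(1), of t] assms(1) by auto
  have eq: "of_nat (Suc t) ^ (k - 1) * q ^ (Suc t * (n + 1)) / (1 - q ^ Suc t)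
       - of_nat (Suc t) ^ (k - 1) * q ^ (Suc t * (Suc n + 1)) / (1 - q ^ Suc t)
       = of_nat (Suc t) ^ (k - 1) * (q ^ Suc n) ^ Suc t" for t
  proof -
    have ee: "Suc t * (Suc n + 1) = Suc t * (n + 1) + Suc t" by simp
    have "q ^ (Suc t * (Suc n + 1)) = q ^ (Suc t * (n + 1)) * q ^ Suc t"
      unfolding ee by (rule power_add)
    moreover have ee2: "Suc t * (n + 1) = Suc n * Suc t" by simp
    have "(q ^ Suc n) ^ Suc t = q ^ (Suc t * (n + 1))"
      unfolding ee2 by (rule power_mult[symmetric])
    moreover have gen: "c * P / (1 - z) - c * (P * z) / (1 - z) = c * P" if "1 - z \<noteq> 0"
      for c P z :: complex
    proof -
      have "c * P - c * (P * z) = c * P * (1 - z)" by (simp add: algebra_simps)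
      thus ?thesis using that by (simp add: diff_divide_distrib[symmetric])
    qed
    ultimately show ?thesis using nz[of t] by (simp only:) (rule gen)
  qed
  have "(\<lambda>t. of_nat (Suc t) ^ (k - 1) * q ^ (Suc t * (n + 1)) / (1 - q ^ Suc t)
       - of_nat (Suc t) ^ (k - 1) * q ^ (Suc t * (Suc n + 1)) / (1 - q ^ Suc t)) sums (Ekn k n q - Ekn k (Suc n) q)"
    unfolding Ekn_def using sums_diff[OF summable_sums[OF s1] summable_sums[OF s2]] by simp
  thus ?thesis unfolding eq .
qed

lemma norm_y_bounds:
  fixes q :: complex
  assumes "norm q < 1"
  shows "norm (q ^ Suc k / (1 - q ^ Suc k)) \<le> 1 / (1 - norm q)"
    and "norm (q ^ Suc k / (1 - q ^ Suc k)^2) \<le> 1 / (1 - norm q)^2"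
proof -
  have c: "1 - norm q \<le> norm (1 - q ^ Suc k)" by (rule norm_one_minus_pow[OF assms(1)])
  have p: "0 < 1 - norm q" using assms by simp
  have y: "norm (q ^ Suc k) \<le> 1" unfolding norm_power using assms
    by (simp only: power_Suc, intro mult_le_one) (auto simp: power_le_one)
  show "norm (q ^ Suc k / (1 - q ^ Suc k)) \<le> 1 / (1 - norm q)"
    unfolding norm_divide using c p y by (intro frac_le) auto
  have "(1 - norm q)^2 \<le> norm (1 - q ^ Suc k)^2" using c p by (intro power_mono) auto
  thus "norm (q ^ Suc k / (1 - q ^ Suc k)^2) \<le> 1 / (1 - norm q)^2"
    unfolding norm_divide norm_power[symmetric] using p y by (intro frac_le) (auto simp: norm_power)
qed

lemma E1_step:
  fixes q :: complex
  assumes "norm q < 1"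
  shows "Ekn 1 n q - Ekn 1 (Suc n) q = q ^ Suc n / (1 - q ^ Suc n)"
proof -
  have "norm (q ^ Suc n) < 1" unfolding norm_power using assms
    by (subst power_less_one_iff) auto
  from sums_mult[OF geometric_sums[OF this], of "q ^ Suc n"]
  have "(\<lambda>t. (q ^ Suc n) ^ Suc t) sums (q ^ Suc n / (1 - q ^ Suc n))" by simp
  moreover have "(\<lambda>t. (q ^ Suc n) ^ Suc t) sums (Ekn 1 n q - Ekn 1 (Suc n) q)"
    using Ekn_diff_sums[OF assms, of 1 n] by simp
  ultimately show ?thesis using sums_unique2 by blast
qed

lemma E2_step:
  fixes q :: complex
  assumes "norm q < 1"
  shows "Ekn 2 n q - Ekn 2 (Suc n) q = q ^ Suc n / (1 - q ^ Suc n)^2"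
proof -
  have "norm (q ^ Suc n) < 1" unfolding norm_power using assms
    by (subst power_less_one_iff) auto
  from sums_mult[OF geometric_deriv_sums[OF this], of "q ^ Suc n"]
  have "(\<lambda>t. of_nat (Suc t) * (q ^ Suc n) ^ Suc t) sums (q ^ Suc n / (1 - q ^ Suc n)^2)"
    by (simp add: algebra_simps)
  moreover have "(\<lambda>t. of_nat (Suc t) * (q ^ Suc n) ^ Suc t) sums (Ekn 2 n q - Ekn 2 (Suc n) q)"
    using Ekn_diff_sums[OF assms, of 2 n] by simp
  ultimately show ?thesis using sums_unique2 by blast
qed

lemma alg1:
  fixes l y d :: complex assumes "d * (1 - y) = 1 + y"
  shows "(l + d + 2) * y^2 - 2 * (l + d + 1) * y + (l + d) = (l+1)*(1-y)^2"
  using assms by algebra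

lemma alg2:
  fixes l e c y d Y :: complex assumes "d * (1 - y) = 1 + y" "Y * (1 - y)^2 = y"
  shows "(1/2 * (l + d + 2)^2 - (e - Y) - c) * y^2
       - 2 * (1/2 * (l + d + 1)^2 - (e - Y) - c) * y
       + (1/2 * (l + d + 0)^2 - (e - Y) - c)
       = (1/2 * (l + 1)^2 - e - c) * (1-y)^2"
  using assms by algebra

lemma Lfac_step:
  fixes q :: complex assumes "norm q < 1"
  shows "Lfac m q (Suc k) = Lfac m q k + (1 + q ^ Suc k) / (1 - q ^ Suc k)"
proof -
  have nz: "1 - q ^ Suc k \<noteq> 0" using norm_one_minus_pow[OF assms, of k] assms by auto
  have "Lfac m q (Suc k) - Lfac m q k = 1 + 2 * (Ekn 1 k q - Ekn 1 (Suc k) q)"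
    by (simp add: Lfac_def algebra_simps)
  also have "\<dots> = (1 + q ^ Suc k) / (1 - q ^ Suc k)"
    unfolding E1_step[OF assms] using nz by (simp add: field_simps)
  finally show ?thesis by (simp add: algebra_simps)
qed

lemma E2n_step:
  fixes q :: complex assumes "norm q < 1"
  shows "Ekn 2 (Suc k) q = Ekn 2 k q - q ^ Suc k / (1 - q ^ Suc k)^2"
  using E2_step[OF assms, of k] by (simp add: algebra_simps)

lemma aux_tri: "norm (1 + 2 * (X::complex)) \<le> 1 + 2 * norm X"
proof -
  have "norm (1 + 2 * X) \<le> norm (1::complex) + norm (2 * X)" by (rule norm_triangle_ineq)
  thus ?thesis by (simp add: norm_mult)
qed

lemma ebd_Lfac:
  fixes q :: complex assumes "norm q < 1"
  shows "ebd (\<lambda>n. Lfac m q n)"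
proof (rule ebd_diff_bounded[of _ "1 + 2 / (1 - norm q)"])
  fix n
  have nz: "1 - q ^ Suc n \<noteq> 0" using norm_one_minus_pow[OF assms, of n] assms by auto
  have "Lfac m q (Suc n) - Lfac m q n = 1 + 2 * (q ^ Suc n / (1 - q ^ Suc n))"
    using E1_step[OF assms, of n] by (simp add: Lfac_def algebra_simps)
  also have "norm \<dots> \<le> 1 + 2 * norm (q ^ Suc n / (1 - q ^ Suc n))"
    by (rule aux_tri)
  also have "\<dots> \<le> 1 + 2 * (1 / (1 - norm q))"
    using norm_y_bounds(1)[OF assms, of n] by simp
  finally show "norm (Lfac m q (Suc n) - Lfac m q n) \<le> 1 + 2 / (1 - norm q)" by simp
qed

lemma ebd_E2n:
  fixes q :: complex assumes "norm q < 1"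
  shows "ebd (\<lambda>n. Ekn 2 n q)"
proof (rule ebd_diff_bounded[of _ "1 / (1 - norm q)^2"])
  fix n
  show "norm (Ekn 2 (Suc n) q - Ekn 2 n q) \<le> 1 / (1 - norm q)^2"
    using norm_y_bounds(2)[OF assms, of n] E2n_step[OF assms, of n] by simp
qed

lemma Lfac_shift: "Lfac (m + int j) q n = Lfac m q n + of_nat j"
  by (simp add: Lfac_def)

lemma R0:
  fixes q :: complex assumes q: "q \<noteq> 0" "norm q < 1"
  shows "G0in (m+2) q - (2 - q powi (m+1)) * G0in (m+1) q + G0in m q = 0"
proof -
  have "(\<Sum>n. 1 * Gterm (m+2) q n) - (2 - q powi (m+1)) * (\<Sum>n. 1 * Gterm (m+1) q n)
          + (\<Sum>n. 1 * Gterm m q n) = 1 - 2 * 1 + 1"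
  proof (rule rec_gen[OF q ebd_const ebd_const ebd_const])
    fix k
    have "q ^ (2 * Suc k) = (q ^ Suc k)^2" by (metis mult.commute power_mult)
    thus "1 * q ^ (2 * Suc k) - 2 * 1 * q ^ Suc k + 1 = 1 * (1 - q ^ Suc k)^2"
      by (simp add: power2_eq_square algebra_simps)
  qed
  thus ?thesis by (simp add: G0in_def)
qed

lemma R1:
  fixes q :: complex assumes q: "q \<noteq> 0" "norm q < 1"
  shows "G1in (m+2) q - (2 - q powi (m+1)) * G1in (m+1) q + G1in m q = 0"
proof -
  define l where "l n = Lfac m q n" for n
  have el: "ebd l" unfolding l_def by (rule ebd_Lfac[OF q(2)])
  have "(\<Sum>n. (l n + 2) * Gterm (m+2) q n) - (2 - q powi (m+1)) * (\<Sum>n. (l n + 1) * Gterm (m+1) q n)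
          + (\<Sum>n. (l n + 0) * Gterm m q n) = (l 0 + 2) - 2 * (l 0 + 1) + (l 0 + 0)"
  proof (rule rec_gen[OF q])
    show "ebd (\<lambda>n. l n + 0)" "ebd (\<lambda>n. l n + 1)" "ebd (\<lambda>n. l n + 2)"
      by (intro ebd_add el ebd_const)+
    fix k
    have y: "q ^ Suc k \<noteq> 1" using norm_one_minus_pow[OF q(2), of k] q(2) by auto
    have p: "q ^ (2 * Suc k) = (q ^ Suc k)^2" by (metis mult.commute power_mult)
    have d: "(1 + q ^ Suc k) / (1 - q ^ Suc k) * (1 - q ^ Suc k) = 1 + q ^ Suc k" using y by simp
    show "(l (Suc k) + 2) * q ^ (2 * Suc k) - 2 * (l (Suc k) + 1) * q ^ Suc k + (l (Suc k) + 0)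
          = (l k + 1) * (1 - q ^ Suc k)^2"
      unfolding p l_def Lfac_step[OF q(2)] using alg1[OF d, of "Lfac m q k"] by simp
  qed
  moreover have "Lfac (m + 2) q n = l n + 2" "Lfac (m + 1) q n = l n + 1" for n
    using Lfac_shift[of m 2 q n] Lfac_shift[of m 1 q n] unfolding l_def by simp_all
  ultimately show ?thesis by (simp add: G1in_def l_def)
qed

lemma R2:
  fixes q :: complex assumes q: "q \<noteq> 0" "norm q < 1"
  shows "G2in (m+2) q - (2 - q powi (m+1)) * G2in (m+1) q + G2in m q = 1"
proof -
  define l where "l n = Lfac m q n" for n
  define c where "c = 1/24 * E2 q"
  define w where "w j n = 1/2 * (l n + j)^2 - Ekn 2 n q - c" for j :: complex and n
  have el: "ebd l" unfolding l_def by (rule ebd_Lfac[OF q(2)])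
  have ew: "ebd (w j)" for j unfolding w_def
    by (intro ebd_diff ebd_mult ebd_const ebd_add el ebd_E2n[OF q(2)]) (simp add: power2_eq_square,
        intro ebd_mult ebd_add el ebd_const)
  have "(\<Sum>n. w 2 n * Gterm (m+2) q n) - (2 - q powi (m+1)) * (\<Sum>n. w 1 n * Gterm (m+1) q n)
          + (\<Sum>n. w 0 n * Gterm m q n) = w 2 0 - 2 * w 1 0 + w 0 0"
  proof (rule rec_gen[OF q ew ew ew])
    fix k
    have y: "q ^ Suc k \<noteq> 1" using norm_one_minus_pow[OF q(2), of k] q(2) by auto
    have p: "q ^ (2 * Suc k) = (q ^ Suc k)^2" by (metis mult.commute power_mult)
    have d: "(1 + q ^ Suc k) / (1 - q ^ Suc k) * (1 - q ^ Suc k) = 1 + q ^ Suc k" using y by simp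
    have Y: "q ^ Suc k / (1 - q ^ Suc k)^2 * (1 - q ^ Suc k)^2 = q ^ Suc k" using y by simp
    show "w 2 (Suc k) * q ^ (2 * Suc k) - 2 * w 1 (Suc k) * q ^ Suc k + w 0 (Suc k)
          = w 1 k * (1 - q ^ Suc k)^2"
      unfolding p w_def l_def Lfac_step[OF q(2)] E2n_step[OF q(2)]
      using alg2[OF d Y, of "Lfac m q k" "Ekn 2 k q" c] by simp
  qed
  moreover have "Lfac (m + 2) q n = l n + 2" "Lfac (m + 1) q n = l n + 1" for n
    using Lfac_shift[of m 2 q n] Lfac_shift[of m 1 q n] unfolding l_def by simp_all
  moreover have "w 2 0 - 2 * w 1 0 + w 0 0 = 1" unfolding w_def by (simp add: power2_eq_square algebra_simps)
  ultimately show ?thesis by (simp add: G2in_def l_def w_def c_def)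
qed

lemma tail_bound:
  fixes q :: complex assumes q: "q \<noteq> 0" "norm q < 1" and w: "ebd w"
  shows "norm ((\<Sum>k. w k * Gterm (int n) q k) - w 0)
           \<le> norm q ^ n * (\<Sum>k. norm (w (Suc k) * Gterm 0 q (Suc k)))"
proof -
  have sh: "Gterm (int n) q k = q ^ (n * k) * Gterm 0 q k" for k
    using Gterm_shift[OF q(1), of 0 n k] by simp
  have s: "summable (\<lambda>k. w k * Gterm (int n) q k)" by (rule summable_Gterm[OF q w])
  have sn0: "summable (\<lambda>k. norm (w (Suc k) * Gterm 0 q (Suc k)))"
    using summable_Gterm_norm[OF q w, of 0] by (subst summable_Suc_iff)
  have bd: "norm (w (Suc k) * Gterm (int n) q (Suc k)) \<le> norm q ^ n * norm (w (Suc k) * Gterm 0 q (Suc k))" for k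
  proof -
    have "norm q ^ (n * Suc k) \<le> norm q ^ n" using q(2) by (intro power_decreasing) auto
    from mult_right_mono[OF this, of "norm (w (Suc k)) * norm (Gterm 0 q (Suc k))"]
    show ?thesis unfolding sh norm_mult norm_power by (simp add: ac_simps)
  qed
  have sn: "summable (\<lambda>k. norm (w (Suc k) * Gterm (int n) q (Suc k)))"
    by (rule summable_comparison_test'[OF summable_mult[OF sn0, of "norm q ^ n"]]) (use bd in auto)
  have "(\<Sum>k. w k * Gterm (int n) q k) - w 0 = (\<Sum>k. w (Suc k) * Gterm (int n) q (Suc k))"
    using suminf_split_head[OF s] by simp
  also have "norm \<dots> \<le> (\<Sum>k. norm (w (Suc k) * Gterm (int n) q (Suc k)))" by (rule summable_norm[OF sn])
  also have "\<dots> \<le> (\<Sum>k. norm q ^ n * norm (w (Suc k) * Gterm 0 q (Suc k)))"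
    by (rule suminf_le[OF bd sn summable_mult[OF sn0]])
  also have "\<dots> = norm q ^ n * (\<Sum>k. norm (w (Suc k) * Gterm 0 q (Suc k)))"
    by (rule suminf_mult[OF sn0])
  finally show ?thesis .
qed

lemma tail_lim:
  fixes q :: complex assumes q: "q \<noteq> 0" "norm q < 1" and w: "ebd w"
  shows "(\<lambda>n. \<Sum>k. w k * Gterm (int n) q k) \<longlonglongrightarrow> w 0"
proof (rule LIM_zero_cancel, rule Lim_null_comparison)
  show "\<forall>\<^sub>F n in sequentially. norm ((\<Sum>k. w k * Gterm (int n) q k) - w 0)
          \<le> norm q ^ n * (\<Sum>k. norm (w (Suc k) * Gterm 0 q (Suc k)))"
    using tail_bound[OF q w] by simp
  have "(\<lambda>n. norm q ^ n) \<longlonglongrightarrow> 0" using q(2) by (intro LIMSEQ_power_zero) simp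
  thus "(\<lambda>n. norm q ^ n * (\<Sum>k. norm (w (Suc k) * Gterm 0 q (Suc k)))) \<longlonglongrightarrow> 0"
    by (rule tendsto_mult_left_zero)
qed

lemma Wconst:
  fixes q :: complex assumes q: "q \<noteq> 0" "norm q < 1"
  shows "G1in m q * G0in (m+1) q - G1in (m+1) q * G0in m q = G1in 0 q * G0in 1 q - G1in 1 q * G0in 0 q"
proof -
  define W where "W m = G1in m q * G0in (m+1) q - G1in (m+1) q * G0in m q" for m
  have step: "W (i + 1) = W i" for i
  proof -
    have a: "G0in (i+2) q = (2 - q powi (i+1)) * G0in (i+1) q - G0in i q" using R0[OF q, of i] by (simp add: algebra_simps)
    have b: "G1in (i+2) q = (2 - q powi (i+1)) * G1in (i+1) q - G1in i q" using R1[OF q, of i] by (simp add: algebra_simps)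
    have "W (i+1) = G1in (i+1) q * G0in (i+2) q - G1in (i+2) q * G0in (i+1) q"
      unfolding W_def by (simp add: add.assoc)
    thus ?thesis unfolding a b W_def by (simp add: algebra_simps)
  qed
  have "W m = W 0"
  proof (induction m rule: int_induct[where k=0])
    case base show ?case ..
  next
    case (step1 i) thus ?case using step[of i] by simp
  next
    case (step2 i) thus ?case using step[of "i - 1"] by simp
  qed
  thus ?thesis unfolding W_def by simp
qed

lemma Wval:
  fixes q :: complex assumes q: "q \<noteq> 0" "norm q < 1"
  shows "G1in m q * G0in (m+1) q - G1in (m+1) q * G0in m q = -1"
proof -
  define W0 where "W0 = G1in 0 q * G0in 1 q - G1in 1 q * G0in 0 q"
  define g where "g n = (\<Sum>k. 1 * Gterm (int n) q k)" for n
  define h where "h n = (\<Sum>k. Lfac 0 q k * Gterm (int n) q k)" for n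
  have g: "g \<longlonglongrightarrow> 1" unfolding g_def using tail_lim[OF q ebd_const, of 1] by simp
  have h: "h \<longlonglongrightarrow> Lfac 0 q 0" unfolding h_def by (rule tail_lim[OF q ebd_Lfac[OF q(2)]])
  have G0: "G0in (int n) q = g n" for n unfolding g_def G0in_def by simp
  have G1: "G1in (int n) q = of_nat n * g n + h n" for n
  proof -
    have sg: "summable (\<lambda>k. 1 * Gterm (int n) q k)" by (rule summable_Gterm[OF q ebd_const])
    have sh: "summable (\<lambda>k. Lfac 0 q k * Gterm (int n) q k)" by (rule summable_Gterm[OF q ebd_Lfac[OF q(2)]])
    have "G1in (int n) q = (\<Sum>k. of_nat n * (1 * Gterm (int n) q k) + Lfac 0 q k * Gterm (int n) q k)"
      unfolding G1in_def using Lfac_shift[of 0 n q] by (intro suminf_cong) (simp add: algebra_simps)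
    also have "\<dots> = of_nat n * g n + h n"
      unfolding g_def h_def by (subst suminf_add[symmetric, OF summable_mult[OF sg] sh], subst suminf_mult[OF sg]) simp
    finally show ?thesis .
  qed
  have eq: "W0 = h n * g (Suc n) - g (Suc n) * g n - h (Suc n) * g n" for n
  proof -
    have "W0 = G1in (int n) q * G0in (int n + 1) q - G1in (int n + 1) q * G0in (int n) q"
      unfolding W0_def by (rule Wconst[OF q, of "int n", symmetric])
    also have "\<dots> = G1in (int n) q * G0in (int (Suc n)) q - G1in (int (Suc n)) q * G0in (int n) q" by (simp add: add.commute)
    also have "\<dots> = h n * g (Suc n) - g (Suc n) * g n - h (Suc n) * g n"
      unfolding G0 G1 by (simp add: algebra_simps)
    finally show ?thesis .
  qed
  have "(\<lambda>n. h n * g (Suc n) - g (Suc n) * g n - h (Suc n) * g n) \<longlonglongrightarrow>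
          Lfac 0 q 0 * 1 - 1 * 1 - Lfac 0 q 0 * 1"
    by (intro tendsto_intros h g LIMSEQ_Suc)
  hence "(\<lambda>n. W0) \<longlonglongrightarrow> -1" unfolding eq[symmetric] by simp
  hence "W0 = -1" by (rule LIMSEQ_unique[OF tendsto_const])
  thus ?thesis using Wconst[OF q, of m] unfolding W0_def by simp
qed

lemma powi_inv_neg:
  fixes q :: complex shows "inverse q powi (- (m + 1)) = q powi (m + 1)"
  by (simp only: power_int_inverse power_int_minus inverse_inverse_eq)

lemma norm_cases:
  fixes q :: complex assumes q: "q \<noteq> 0" "norm q \<noteq> 1"
  shows "(norm q < 1 \<and> \<not> norm (inverse q) < 1) \<or> (norm (inverse q) < 1 \<and> \<not> norm q < 1)"
proof -
  have n: "norm (inverse q) = inverse (norm q)" by (rule norm_inverse)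
  have p: "norm q > 0" using q by simp
  show ?thesis
  proof (cases "norm q < 1")
    case True
    hence "1 < inverse (norm q)" using p by (simp add: one_less_inverse)
    thus ?thesis using True n by simp
  next
    case False
    hence "norm q > 1" using q by simp
    hence "inverse (norm q) < 1" by (simp add: inverse_less_1_iff)
    thus ?thesis using False n by simp
  qed
qed

lemma Grec:
  fixes q :: complex assumes q: "q \<noteq> 0" "norm q \<noteq> 1"
  shows "G0 (m+2) q = (2 - q powi (m+1)) * G0 (m+1) q - G0 m q"
    and "G1 (m+2) q = (2 - q powi (m+1)) * G1 (m+1) q - G1 m q"
    and "G2 (m+2) q = (2 - q powi (m+1)) * G2 (m+1) q - G2 m q + 1"
    and "G1 m q * G0 (m+1) q - G1 (m+1) q * G0 m q = -1"
proof -
  have "(norm q < 1) \<or> (norm (inverse q) < 1 \<and> \<not> norm q < 1)"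
    using norm_cases[OF q] by blast
  hence "(G0 (m+2) q = (2 - q powi (m+1)) * G0 (m+1) q - G0 m q) \<and>
    (G1 (m+2) q = (2 - q powi (m+1)) * G1 (m+1) q - G1 m q) \<and>
    (G2 (m+2) q = (2 - q powi (m+1)) * G2 (m+1) q - G2 m q + 1) \<and>
    (G1 m q * G0 (m+1) q - G1 (m+1) q * G0 m q = -1)"
  proof
    assume l: "norm q < 1"
    show ?thesis using R0[OF q(1) l, of m] R1[OF q(1) l, of m] R2[OF q(1) l, of m] Wval[OF q(1) l, of m] l
      by (simp add: G0_def G1_def G2_def algebra_simps)
  next
    assume l: "norm (inverse q) < 1 \<and> \<not> norm q < 1"
    define p where "p = inverse q"
    have p: "p \<noteq> 0" "norm p < 1" using l q unfolding p_def by auto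
    define k where "k = - m - 2"
    have k1: "k + 2 = - m" "k + 1 = - (m + 1)" "k = - (m+2)" "- (m + 1) + 1 = - m" unfolding k_def by auto
    have pp: "p powi (- (m + 1)) = q powi (m + 1)" unfolding p_def by (rule powi_inv_neg)
    have r0: "G0in (- m) p - (2 - q powi (m+1)) * G0in (- (m+1)) p + G0in (- (m+2)) p = 0"
      using R0[OF p, of k] unfolding k1(1,2) unfolding pp k1(3) .
    have r1: "G1in (- m) p - (2 - q powi (m+1)) * G1in (- (m+1)) p + G1in (- (m+2)) p = 0"
      using R1[OF p, of k] unfolding k1(1,2) unfolding pp k1(3) .
    have r2: "G2in (- m) p - (2 - q powi (m+1)) * G2in (- (m+1)) p + G2in (- (m+2)) p = 1"
      using R2[OF p, of k] unfolding k1(1,2) unfolding pp k1(3) .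
    have w: "G1in (- (m+1)) p * G0in (- m) p - G1in (- m) p * G0in (- (m+1)) p = -1"
      using Wval[OF p, of "- (m+1)"] unfolding k1(4) .
    show ?thesis using r0 r1 r2 w l unfolding p_def
      by (simp add: G0_def G1_def G2_def algebra_simps)
  qed
  thus "G0 (m+2) q = (2 - q powi (m+1)) * G0 (m+1) q - G0 m q"
    and "G1 (m+2) q = (2 - q powi (m+1)) * G1 (m+1) q - G1 m q"
    and "G2 (m+2) q = (2 - q powi (m+1)) * G2 (m+1) q - G2 m q + 1"
    and "G1 m q * G0 (m+1) q - G1 (m+1) q * G0 m q = -1" by auto
qed

lemma Ginv:
  fixes q :: complex assumes q: "q \<noteq> 0" "norm q \<noteq> 1"
  shows "G0 m (inverse q) = G0 (- m) q" "G1 m (inverse q) = - G1 (- m) q" "G2 m (inverse q) = G2 (- m) q"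
proof -
  have "(norm q < 1 \<and> \<not> norm (inverse q) < 1) \<or> (norm (inverse q) < 1 \<and> \<not> norm q < 1)"
    by (rule norm_cases[OF q])
  thus "G0 m (inverse q) = G0 (- m) q" "G1 m (inverse q) = - G1 (- m) q" "G2 m (inverse q) = G2 (- m) q"
    by (auto simp: G0_def G1_def G2_def)
qed

theorem theorem2p1:
  fixes m :: int and q :: complex
  assumes "q \<noteq> 0" and "norm q \<noteq> 1"
  shows "Jmat (m + 1) q = Jmat m q ** Amat m q \<and>
         det (Jmat m q) = -1 \<and>
         Jmat m (inverse q) =
           (vector [vector [1, 0, 0], vector [0, -1, 0], vector [0, 0, 1]] :: complex ^ 3 ^ 3)
           ** Jmat (- m - 1) q
           ** (vector [vector [1, 0, 0], vector [0, 0, 1], vector [0, 1, 0]] :: complex ^ 3 ^ 3)"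
proof (intro conjI)
  note R = Grec[OF assms, of m]
  have e: "m + 1 + 1 = m + 2" by simp
  have c0: "Jmat (m + 1) q = vector [vector [1, G2 (m+1) q, G2 (m+2) q],
                      vector [0, G1 (m+1) q, G1 (m+2) q],
                      vector [0, G0 (m+1) q, G0 (m+2) q]]"
    unfolding Jmat_def e ..
  show "Jmat (m + 1) q = Jmat m q ** Amat m q"
    unfolding c0 R(1-3) unfolding Jmat_def Amat_def vec_eq_iff forall_3 matrix_matrix_mult_def
    by (simp add: sum_3)
  show "det (Jmat m q) = -1"
    unfolding det_3 Jmat_def using R(4) by simp
  have c1: "Jmat (- m - 1) q = vector [vector [1, G2 (- (m+1)) q, G2 (- m) q],
                      vector [0, G1 (- (m+1)) q, G1 (- m) q],
                      vector [0, G0 (- (m+1)) q, G0 (- m) q]]"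
  proof -
    have "- m - 1 + 1 = - m" "- m - 1 = - (m + 1)" by simp_all
    thus ?thesis unfolding Jmat_def by (simp only:)
  qed
  have c2: "Jmat m (inverse q) = vector [vector [1, G2 (- m) q, G2 (- (m+1)) q],
                      vector [0, - G1 (- m) q, - G1 (- (m+1)) q],
                      vector [0, G0 (- m) q, G0 (- (m+1)) q]]"
    unfolding Jmat_def Ginv[OF assms, of m] Ginv[OF assms, of "m+1"] ..
  show "Jmat m (inverse q) =
           (vector [vector [1, 0, 0], vector [0, -1, 0], vector [0, 0, 1]] :: complex ^ 3 ^ 3)
           ** Jmat (- m - 1) q
           ** (vector [vector [1, 0, 0], vector [0, 0, 1], vector [0, 1, 0]] :: complex ^ 3 ^ 3)"
    unfolding c1 c2 vec_eq_iff forall_3 matrix_matrix_mult_def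
    by (simp add: sum_3)
qed

end
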